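(* For every $\varphi\in\mathcal{L}_{AIL}$, the canonical model $M^*$ for $cl(\varphi)$ is an epistemic model with awareness.
   Context: An epistemic model with awareness is $\langle W,\{\sim_i,\mathscr{A}_i\}_{i\in\mathcal{G}},V\rangle$ with $W\neq\emptyset$, $\sim_i$ an equivalence relation on $W$, $\mathscr{A}_i:W\to2^{\mathcal{P}}$ with $\mathscr{A}_i(w)=\mathscr{A}_i(v)$ whenever $(w,v)\in\sim_i$, and $V:\mathcal{P}\to2^W$ ($\mathcal{P}$ countable atoms, $\mathcal{G}$ finite agents). $\mathcal{L}_{AIL}$: $\varphi::=p\mid\neg\varphi\mid\varphi\wedge\varphi\mid A_i\varphi\mid I_i\varphi\mid E_i\varphi\mid[\approx]_i\varphi\mid[\circ^+]_i\varphi$. Hilbert system $\mathbf{AIL}$: axioms — propositional tautologies; $A_i\varphi\leftrightarrow A_i\neg\varphi$; $A_i(\varphi\wedge\psi)\leftrightarrow A_i\varphi\wedge A_i\psi$; $A_i\varphi\leftrightarrow A_iO_j\varphi$ for $O_j\in\{A_j,I_j,[\approx]_j,[\circ^+]_j,E_j\}$; $A_i\varphi\to I_iA_i\varphi$; $\neg A_i\varphi\to I_i\neg A_i\varphi$; $A_ip\wedge p\to[\approx]_ip$; for $\Box\in\{I_i,[\approx]_i\}$: $\Box(\varphi\to\psi)\to(\Box\varphi\to\Box\psi)$, $\Box\varphi\to\varphi$, $\neg\Box\varphi\to\Box\neg\Box\varphi$; $[\circ^+]_i(\varphi\to\psi)\to([\circ^+]_i\varphi\to[\circ^+]_i\psi)$;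 $[\circ^+]_i\varphi\to\varphi\wedge[\approx]_iI_i[\circ^+]_i\varphi$; $[\circ^+]_i(\varphi\to[\approx]_iI_i\varphi)\to(\varphi\to[\circ^+]_i\varphi)$; $E_i\varphi\leftrightarrow A_i\varphi\wedge[\circ^+]_i\varphi$; rules: modus ponens, necessitation for $I_i,[\approx]_i,[\circ^+]_i$. $\Gamma\vdash\varphi$ iff $\vdash\bigwedge\Gamma'\to\varphi$ for some finite $\Gamma'\subseteq\Gamma$. $cl(\varphi)$ is the smallest set containing $\varphi$ closed under: subformulas; $\neg\psi$ for non-negations $\psi$; $A_i\psi\Rightarrow A_i\chi$ for subformulas $\chi$ of $\psi$; $A_i\psi\Rightarrow I_iA_i\psi,I_i\neg A_i\psi,[\approx]_ip$ for atoms $p$ in $\psi$; $I_i\psi\Rightarrow I_iI_i\psi,I_i\neg I_i\psi$ unless $\psi$ is $I_i\chi$ or $\neg I_i\chi$; analogously for $[\approx]_i$; $[\circ^+]_i\psi\Rightarrow[\approx]_iI_i[\circ^+]_i\psi$; $E_i\psi\Rightarrow A_i\psi,[\circ^+]_i\psi$. A maximal consistent set in $\Phi$ is $\Gamma\subseteq\Phi$ with $\Gamma\nvdash\bot$ and no consistent $\Gamma'\subseteq\Phi$ properly extending it. The canonical model for $\Phi$ is $M^*=\langle W^*,\{\sim_i^*,\mathscr{A}_i^*\},V^*\rangle$: $W^*$ is the set of maximal consistent sets in $\Phi$; $(\Gamma,\Delta)\in\sim_i^*$ iff $\{\psi: I_i\psi\in\Gamma\}\subseteq\Delta$; $V^*(p)=\{\Gamma:p\in\Gamma\}$;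 $\mathscr{A}_i^*(\Gamma)=\{p: A_ip\in\Gamma\}$. *)

theory Defs
  imports "HOL-Library.Countable"
begin

text \<open>Atoms of type 'a (countable), agents of type 'g (finite).
  Constructors: Atom p, Neg, Conj, Aw i (A_i), Inf i (I_i), Exp i (E_i),
  Ind i ([approx]_i), Plus i ([circ+]_i).\<close>

datatype ('a, 'g) fm =
    Atom 'a
  | Neg "('a, 'g) fm"
  | Conj "('a, 'g) fm" "('a, 'g) fm"
  | Aw 'g "('a, 'g) fm"
  | Inf 'g "('a, 'g) fm"
  | Exp 'g "('a, 'g) fm"
  | Ind 'g "('a, 'g) fm"
  | Plus 'g "('a, 'g) fm"

definition Imp :: "('a, 'g) fm \<Rightarrow> ('a, 'g) fm \<Rightarrow> ('a, 'g) fm" where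
  "Imp \<phi> \<psi> = Neg (Conj \<phi> (Neg \<psi>))"

definition Iff :: "('a, 'g) fm \<Rightarrow> ('a, 'g) fm \<Rightarrow> ('a, 'g) fm" where
  "Iff \<phi> \<psi> = Conj (Imp \<phi> \<psi>) (Imp \<psi> \<phi>)"

text \<open>Falsum: a fixed propositional contradiction (all such are interderivable).\<close>
definition Bot :: "('a, 'g) fm" where
  "Bot = Conj (Atom undefined) (Neg (Atom undefined))"

definition Top :: "('a, 'g) fm" where
  "Top = Neg Bot"

definition Conjs :: "('a, 'g) fm list \<Rightarrow> ('a, 'g) fm" where
  "Conjs xs = foldr Conj xs Top"

fun peval :: "(('a, 'g) fm \<Rightarrow> bool) \<Rightarrow> ('a, 'g) fm \<Rightarrow> bool" where
  "peval v (Neg \<phi>) = (\<not> peval v \<phi>)"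
| "peval v (Conj \<phi> \<psi>) = (peval v \<phi> \<and> peval v \<psi>)"
| "peval v \<phi> = v \<phi>"

definition tautology :: "('a, 'g) fm \<Rightarrow> bool" where
  "tautology \<phi> \<longleftrightarrow> (\<forall>v. peval v \<phi>)"

inductive AIL :: "('a, 'g) fm \<Rightarrow> bool" where
  Taut: "tautology \<phi> \<Longrightarrow> AIL \<phi>"
| A_neg: "AIL (Iff (Aw i \<phi>) (Aw i (Neg \<phi>)))"
| A_conj: "AIL (Iff (Aw i (Conj \<phi> \<psi>)) (Conj (Aw i \<phi>) (Aw i \<psi>)))"
| A_A: "AIL (Iff (Aw i \<phi>) (Aw i (Aw j \<phi>)))"
| A_I: "AIL (Iff (Aw i \<phi>) (Aw i (Inf j \<phi>)))"
| A_Ind: "AIL (Iff (Aw i \<phi>) (Aw i (Ind j \<phi>)))"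
| A_Plus: "AIL (Iff (Aw i \<phi>) (Aw i (Plus j \<phi>)))"
| A_E: "AIL (Iff (Aw i \<phi>) (Aw i (Exp j \<phi>)))"
| A_intro: "AIL (Imp (Aw i \<phi>) (Inf i (Aw i \<phi>)))"
| NA_intro: "AIL (Imp (Neg (Aw i \<phi>)) (Inf i (Neg (Aw i \<phi>))))"
| A_atom: "AIL (Imp (Conj (Aw i (Atom p)) (Atom p)) (Ind i (Atom p)))"
| I_K: "AIL (Imp (Inf i (Imp \<phi> \<psi>)) (Imp (Inf i \<phi>) (Inf i \<psi>)))"
| I_T: "AIL (Imp (Inf i \<phi>) \<phi>)"
| I_5: "AIL (Imp (Neg (Inf i \<phi>)) (Inf i (Neg (Inf i \<phi>))))"
| Ind_K: "AIL (Imp (Ind i (Imp \<phi> \<psi>)) (Imp (Ind i \<phi>) (Ind i \<psi>)))"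
| Ind_T: "AIL (Imp (Ind i \<phi>) \<phi>)"
| Ind_5: "AIL (Imp (Neg (Ind i \<phi>)) (Ind i (Neg (Ind i \<phi>))))"
| Plus_K: "AIL (Imp (Plus i (Imp \<phi> \<psi>)) (Imp (Plus i \<phi>) (Plus i \<psi>)))"
| Plus_mix: "AIL (Imp (Plus i \<phi>) (Conj \<phi> (Ind i (Inf i (Plus i \<phi>)))))"
| Plus_ind: "AIL (Imp (Plus i (Imp \<phi> (Ind i (Inf i \<phi>)))) (Imp \<phi> (Plus i \<phi>)))"
| E_def: "AIL (Iff (Exp i \<phi>) (Conj (Aw i \<phi>) (Plus i \<phi>)))"
| MP: "AIL (Imp \<phi> \<psi>) \<Longrightarrow> AIL \<phi> \<Longrightarrow> AIL \<psi>"
| Nec_I: "AIL \<phi> \<Longrightarrow> AIL (Inf i \<phi>)"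
| Nec_Ind: "AIL \<phi> \<Longrightarrow> AIL (Ind i \<phi>)"
| Nec_Plus: "AIL \<phi> \<Longrightarrow> AIL (Plus i \<phi>)"

definition derives :: "('a, 'g) fm set \<Rightarrow> ('a, 'g) fm \<Rightarrow> bool" where
  "derives \<Gamma> \<phi> \<longleftrightarrow> (\<exists>xs. set xs \<subseteq> \<Gamma> \<and> AIL (Imp (Conjs xs) \<phi>))"

definition consistent :: "('a, 'g) fm set \<Rightarrow> bool" where
  "consistent \<Gamma> \<longleftrightarrow> \<not> derives \<Gamma> Bot"

definition mcs_in :: "('a, 'g) fm set \<Rightarrow> ('a, 'g) fm set \<Rightarrow> bool" where
  "mcs_in \<Phi> \<Gamma> \<longleftrightarrow> \<Gamma> \<subseteq> \<Phi> \<and> consistent \<Gamma> \<and>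
     (\<forall>\<Gamma>'. \<Gamma> \<subset> \<Gamma>' \<and> \<Gamma>' \<subseteq> \<Phi> \<longrightarrow> \<not> consistent \<Gamma>')"

fun subfms :: "('a, 'g) fm \<Rightarrow> ('a, 'g) fm set" where
  "subfms (Atom p) = {Atom p}"
| "subfms (Neg \<phi>) = insert (Neg \<phi>) (subfms \<phi>)"
| "subfms (Conj \<phi> \<psi>) = insert (Conj \<phi> \<psi>) (subfms \<phi> \<union> subfms \<psi>)"
| "subfms (Aw i \<phi>) = insert (Aw i \<phi>) (subfms \<phi>)"
| "subfms (Inf i \<phi>) = insert (Inf i \<phi>) (subfms \<phi>)"
| "subfms (Exp i \<phi>) = insert (Exp i \<phi>) (subfms \<phi>)"
| "subfms (Ind i \<phi>) = insert (Ind i \<phi>) (subfms \<phi>)"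
| "subfms (Plus i \<phi>) = insert (Plus i \<phi>) (subfms \<phi>)"

fun atoms :: "('a, 'g) fm \<Rightarrow> 'a set" where
  "atoms (Atom p) = {p}"
| "atoms (Neg \<phi>) = atoms \<phi>"
| "atoms (Conj \<phi> \<psi>) = atoms \<phi> \<union> atoms \<psi>"
| "atoms (Aw i \<phi>) = atoms \<phi>"
| "atoms (Inf i \<phi>) = atoms \<phi>"
| "atoms (Exp i \<phi>) = atoms \<phi>"
| "atoms (Ind i \<phi>) = atoms \<phi>"
| "atoms (Plus i \<phi>) = atoms \<phi>"

fun is_neg :: "('a, 'g) fm \<Rightarrow> bool" where
  "is_neg (Neg _) = True"
| "is_neg _ = False"

inductive_set cl :: "('a, 'g) fm \<Rightarrow> ('a, 'g) fm set" for \<phi> :: "('a, 'g) fm" where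
  base: "\<phi> \<in> cl \<phi>"
| sub: "\<psi> \<in> cl \<phi> \<Longrightarrow> \<chi> \<in> subfms \<psi> \<Longrightarrow> \<chi> \<in> cl \<phi>"
| neg: "\<psi> \<in> cl \<phi> \<Longrightarrow> \<not> is_neg \<psi> \<Longrightarrow> Neg \<psi> \<in> cl \<phi>"
| A_sub: "Aw i \<psi> \<in> cl \<phi> \<Longrightarrow> \<chi> \<in> subfms \<psi> \<Longrightarrow> Aw i \<chi> \<in> cl \<phi>"
| A_IA: "Aw i \<psi> \<in> cl \<phi> \<Longrightarrow> Inf i (Aw i \<psi>) \<in> cl \<phi>"
| A_INA: "Aw i \<psi> \<in> cl \<phi> \<Longrightarrow> Inf i (Neg (Aw i \<psi>)) \<in> cl \<phi>"
| A_Ind: "Aw i \<psi> \<in> cl \<phi> \<Longrightarrow> p \<in> atoms \<psi> \<Longrightarrow> Ind i (Atom p) \<in> cl \<phi>"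
| I_II: "Inf i \<psi> \<in> cl \<phi> \<Longrightarrow> \<not> (\<exists>\<chi>. \<psi> = Inf i \<chi> \<or> \<psi> = Neg (Inf i \<chi>))
           \<Longrightarrow> Inf i (Inf i \<psi>) \<in> cl \<phi>"
| I_INI: "Inf i \<psi> \<in> cl \<phi> \<Longrightarrow> \<not> (\<exists>\<chi>. \<psi> = Inf i \<chi> \<or> \<psi> = Neg (Inf i \<chi>))
           \<Longrightarrow> Inf i (Neg (Inf i \<psi>)) \<in> cl \<phi>"
| Ind_II: "Ind i \<psi> \<in> cl \<phi> \<Longrightarrow> \<not> (\<exists>\<chi>. \<psi> = Ind i \<chi> \<or> \<psi> = Neg (Ind i \<chi>))
           \<Longrightarrow> Ind i (Ind i \<psi>) \<in> cl \<phi>"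
| Ind_INI: "Ind i \<psi> \<in> cl \<phi> \<Longrightarrow> \<not> (\<exists>\<chi>. \<psi> = Ind i \<chi> \<or> \<psi> = Neg (Ind i \<chi>))
           \<Longrightarrow> Ind i (Neg (Ind i \<psi>)) \<in> cl \<phi>"
| Plus_cl: "Plus i \<psi> \<in> cl \<phi> \<Longrightarrow> Ind i (Inf i (Plus i \<psi>)) \<in> cl \<phi>"
| E_A: "Exp i \<psi> \<in> cl \<phi> \<Longrightarrow> Aw i \<psi> \<in> cl \<phi>"
| E_Plus: "Exp i \<psi> \<in> cl \<phi> \<Longrightarrow> Plus i \<psi> \<in> cl \<phi>"

definition epistemic_model ::
  "'s set \<Rightarrow> ('g \<Rightarrow> 's rel) \<Rightarrow> ('g \<Rightarrow> 's \<Rightarrow> 'a set) \<Rightarrow> ('a \<Rightarrow> 's set) \<Rightarrow> bool" where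
  "epistemic_model W R A V \<longleftrightarrow>
     W \<noteq> {} \<and>
     (\<forall>i. equiv W (R i)) \<and>
     (\<forall>i w v. (w, v) \<in> R i \<longrightarrow> A i w = A i v) \<and>
     (\<forall>p. V p \<subseteq> W)"

definition canon_W :: "('a, 'g) fm set \<Rightarrow> ('a, 'g) fm set set" where
  "canon_W \<Phi> = {\<Gamma>. mcs_in \<Phi> \<Gamma>}"

definition canon_R :: "('a, 'g) fm set \<Rightarrow> 'g \<Rightarrow> (('a, 'g) fm set) rel" where
  "canon_R \<Phi> i = {(\<Gamma>, \<Delta>). \<Gamma> \<in> canon_W \<Phi> \<and> \<Delta> \<in> canon_W \<Phi> \<and> {\<psi>. Inf i \<psi> \<in> \<Gamma>} \<subseteq> \<Delta>}"

definition canon_A :: "('a, 'g) fm set \<Rightarrow> 'g \<Rightarrow> ('a, 'g) fm set \<Rightarrow> 'a set" where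
  "canon_A \<Phi> i \<Gamma> = {p. Aw i (Atom p) \<in> \<Gamma>}"

definition canon_V :: "('a, 'g) fm set \<Rightarrow> 'a \<Rightarrow> ('a, 'g) fm set set" where
  "canon_V \<Phi> p = {\<Gamma> \<in> canon_W \<Phi>. Atom p \<in> \<Gamma>}"

end

theory Submission
  imports Defs
begin

lemma peval_Imp[simp]: "peval v (Imp a b) = (peval v a \<longrightarrow> peval v b)"
  by (simp add: Imp_def)
lemma peval_Bot[simp]: "\<not> peval v Bot"
  by (simp add: Bot_def)
lemma peval_Top[simp]: "peval v Top"
  by (simp add: Top_def)
lemma peval_Conjs[simp]: "peval v (Conjs xs) = (\<forall>x\<in>set xs. peval v x)"
  by (induction xs) (simp_all add: Conjs_def)

fun tr :: "('a, 'g) fm \<Rightarrow> bool" where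
  "tr (Atom p) = False"
| "tr (Neg a) = (\<not> tr a)"
| "tr (Conj a b) = (tr a \<and> tr b)"
| "tr (Aw i a) = True"
| "tr (Inf i a) = tr a"
| "tr (Exp i a) = tr a"
| "tr (Ind i a) = tr a"
| "tr (Plus i a) = tr a"

lemma peval_tr: "peval tr \<phi> = tr \<phi>"
  by (induction \<phi>) auto

lemma AIL_sound: "AIL \<phi> \<Longrightarrow> tr \<phi>"
proof (induction rule: AIL.induct)
  case (Taut \<phi>)
  then have "peval tr \<phi>" by (simp add: tautology_def)
  then show ?case by (simp add: peval_tr)
qed (auto simp: Imp_def Iff_def)

lemma taut_mp: "(\<forall>v. (\<forall>a\<in>set as. peval v a) \<longrightarrow> peval v b) \<Longrightarrow> (\<forall>a\<in>set as. AIL a) \<Longrightarrow> AIL b"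
proof (induction as arbitrary: b)
  case Nil then show ?case by (intro AIL.Taut) (simp add: tautology_def)
next
  case (Cons a as)
  have "AIL (Imp a b)" using Cons.prems by (intro Cons.IH) auto
  then show ?case using Cons.prems by (meson AIL.MP list.set_intros(1))
qed

lemma derives_taut: "(\<forall>v. (\<forall>a\<in>set as. peval v a) \<longrightarrow> peval v b) \<Longrightarrow> (\<forall>a\<in>set as. derives \<Gamma> a) \<Longrightarrow> derives \<Gamma> b"
proof (induction as arbitrary: b)
  case Nil
  have "AIL (Imp (Conjs []) b)" by (rule taut_mp[of "[]"]) (use Nil in auto)
  then show ?case unfolding derives_def by (intro exI[of _ "[]"]) auto
next
  case (Cons a as)
  have "derives \<Gamma> (Imp a b)" using Cons.prems by (intro Cons.IH) auto
  then obtain xs where xs: "set xs \<subseteq> \<Gamma>" "AIL (Imp (Conjs xs) (Imp a b))"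
    unfolding derives_def by blast
  obtain ys where ys: "set ys \<subseteq> \<Gamma>" "AIL (Imp (Conjs ys) a)"
    using Cons.prems unfolding derives_def by auto
  have "AIL (Imp (Conjs (xs@ys)) b)"
    by (rule taut_mp[of "[Imp (Conjs xs) (Imp a b), Imp (Conjs ys) a]"]) (use xs ys in auto)
  then show ?case using xs ys unfolding derives_def by (intro exI[of _ "xs@ys"]) auto
qed

lemma derives_mem: "a \<in> \<Gamma> \<Longrightarrow> derives \<Gamma> a"
  unfolding derives_def
  by (intro exI[of _ "[a]"]) (auto intro: taut_mp[of "[]"])

lemma derives_ax: "AIL a \<Longrightarrow> derives \<Gamma> a"
  unfolding derives_def
  by (intro exI[of _ "[]"]) (auto intro: taut_mp[of "[a]"])

lemma derives_mp: "derives \<Gamma> (Imp a b) \<Longrightarrow> derives \<Gamma> a \<Longrightarrow> derives \<Gamma> b"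
  by (rule derives_taut[of "[Imp a b, a]"]) auto

lemma mcs_neg:
  assumes M: "mcs_in \<Phi> \<Gamma>" and t: "\<theta> \<in> \<Phi>" "\<theta> \<notin> \<Gamma>"
  shows "derives \<Gamma> (Neg \<theta>)"
proof -
  have "\<not> consistent (insert \<theta> \<Gamma>)" using M t unfolding mcs_in_def by blast
  then obtain ys where ys: "set ys \<subseteq> insert \<theta> \<Gamma>" "AIL (Imp (Conjs ys) Bot)"
    by (auto simp: consistent_def derives_def)
  let ?ys = "filter (\<lambda>x. x \<noteq> \<theta>) ys"
  have "AIL (Imp (Conjs ?ys) (Neg \<theta>))"
    by (rule taut_mp[of "[Imp (Conjs ys) Bot]"]) (use ys in force)+
  moreover have "set ?ys \<subseteq> \<Gamma>" using ys by auto
  ultimately show ?thesis unfolding derives_def by blast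
qed

lemma mcs_cons: "mcs_in \<Phi> \<Gamma> \<Longrightarrow> derives \<Gamma> a \<Longrightarrow> derives \<Gamma> (Neg a) \<Longrightarrow> False"
  unfolding mcs_in_def consistent_def
  using derives_taut[of "[a, Neg a]" Bot \<Gamma>] by auto

lemma mcs_in': "mcs_in \<Phi> \<Gamma> \<Longrightarrow> \<theta> \<in> \<Phi> \<Longrightarrow> derives \<Gamma> \<theta> \<Longrightarrow> \<theta> \<in> \<Gamma>"
  using mcs_neg mcs_cons by blast

lemma I_mono: "AIL (Imp a b) \<Longrightarrow> AIL (Imp (Inf i a) (Inf i b))"
  by (meson AIL.I_K AIL.MP AIL.Nec_I)

lemma I_4: "AIL (Imp (Inf i \<theta>) (Inf i (Inf i \<theta>)))"
proof -
  have b1: "AIL (Imp (Neg (Inf i \<theta>)) (Inf i (Neg (Inf i \<theta>))))" by (rule AIL.I_5)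
  have b2: "AIL (Imp (Neg (Inf i (Neg (Inf i \<theta>)))) (Inf i \<theta>))"
    by (rule taut_mp[of "[Imp (Neg (Inf i \<theta>)) (Inf i (Neg (Inf i \<theta>)))]"]) (use b1 in auto)
  have b3: "AIL (Imp (Inf i (Neg (Inf i (Neg (Inf i \<theta>))))) (Inf i (Inf i \<theta>)))"
    using I_mono[OF b2] .
  have b4: "AIL (Imp (Inf i (Neg (Inf i \<theta>))) (Neg (Inf i \<theta>)))" by (rule AIL.I_T)
  have b5: "AIL (Imp (Neg (Inf i (Neg (Inf i \<theta>)))) (Inf i (Neg (Inf i (Neg (Inf i \<theta>))))))"
    by (rule AIL.I_5)
  show ?thesis
    by (rule taut_mp[of "[Imp (Inf i (Neg (Inf i (Neg (Inf i \<theta>))))) (Inf i (Inf i \<theta>)),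
        Imp (Inf i (Neg (Inf i \<theta>))) (Neg (Inf i \<theta>)),
        Imp (Neg (Inf i (Neg (Inf i \<theta>)))) (Inf i (Neg (Inf i (Neg (Inf i \<theta>)))))]"])
       (use b3 b4 b5 in auto)
qed

lemma self_subfms: "x \<in> subfms x"
  by (cases x) auto

lemma cl_Inf_sub: "Inf i \<theta> \<in> cl \<phi> \<Longrightarrow> \<theta> \<in> cl \<phi>"
  by (rule cl.sub) (auto simp: self_subfms)

lemma R_D: "(\<Gamma>, \<Delta>) \<in> canon_R \<Phi> i \<Longrightarrow> mcs_in \<Phi> \<Gamma> \<and> mcs_in \<Phi> \<Delta> \<and> (\<forall>\<psi>. Inf i \<psi> \<in> \<Gamma> \<longrightarrow> \<psi> \<in> \<Delta>)"
  by (auto simp: canon_R_def canon_W_def)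

lemma I_I_iff:
  assumes M: "mcs_in (cl \<phi>) \<Gamma>" and c: "Inf i (Inf i \<chi>) \<in> cl \<phi>"
  shows "Inf i (Inf i \<chi>) \<in> \<Gamma> \<longleftrightarrow> Inf i \<chi> \<in> \<Gamma>"
proof -
  have c2: "Inf i \<chi> \<in> cl \<phi>" using cl_Inf_sub[OF c] .
  show ?thesis
  proof
    assume "Inf i (Inf i \<chi>) \<in> \<Gamma>"
    then show "Inf i \<chi> \<in> \<Gamma>"
      by (meson AIL.I_T M c2 derives_ax derives_mem derives_mp mcs_in')
  next
    assume "Inf i \<chi> \<in> \<Gamma>"
    then show "Inf i (Inf i \<chi>) \<in> \<Gamma>"
      by (meson I_4 M c derives_ax derives_mem derives_mp mcs_in')
  qed
qed

lemma I_NI_iff: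
  assumes M: "mcs_in (cl \<phi>) \<Gamma>" and c: "Inf i (Neg (Inf i \<chi>)) \<in> cl \<phi>"
  shows "Inf i (Neg (Inf i \<chi>)) \<in> \<Gamma> \<longleftrightarrow> Inf i \<chi> \<notin> \<Gamma>"
proof -
  have c2: "Inf i \<chi> \<in> cl \<phi>" by (rule cl.sub[OF c]) (auto simp: self_subfms)
  show ?thesis
  proof
    assume "Inf i (Neg (Inf i \<chi>)) \<in> \<Gamma>"
    then have "derives \<Gamma> (Neg (Inf i \<chi>))"
      by (meson AIL.I_T derives_ax derives_mem derives_mp)
    then show "Inf i \<chi> \<notin> \<Gamma>" using M derives_mem mcs_cons by blast
  next
    assume "Inf i \<chi> \<notin> \<Gamma>"
    then have "derives \<Gamma> (Neg (Inf i \<chi>))" using mcs_neg M c2 by blast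
    then show "Inf i (Neg (Inf i \<chi>)) \<in> \<Gamma>"
      by (meson AIL.I_5 M c derives_ax derives_mp mcs_in')
  qed
qed

lemma generic_iff:
  assumes R: "(\<Gamma>, \<Delta>) \<in> canon_R (cl \<phi>) i" and hI: "Inf i \<theta> \<in> cl \<phi>"
    and ng: "\<not> (\<exists>\<chi>. \<theta> = Inf i \<chi> \<or> \<theta> = Neg (Inf i \<chi>))"
  shows "Inf i \<theta> \<in> \<Gamma> \<longleftrightarrow> Inf i \<theta> \<in> \<Delta>"
proof -
  have c1: "Inf i (Inf i \<theta>) \<in> cl \<phi>" by (rule cl.I_II[OF hI ng])
  have c2: "Inf i (Neg (Inf i \<theta>)) \<in> cl \<phi>" by (rule cl.I_INI[OF hI ng])
  have MG: "mcs_in (cl \<phi>) \<Gamma>" and MD: "mcs_in (cl \<phi>) \<Delta>"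
    and RR: "\<And>\<psi>. Inf i \<psi> \<in> \<Gamma> \<Longrightarrow> \<psi> \<in> \<Delta>" using R_D[OF R] by auto
  show ?thesis
  proof
    assume "Inf i \<theta> \<in> \<Gamma>"
    then have "Inf i (Inf i \<theta>) \<in> \<Gamma>" using I_I_iff[OF MG c1] by simp
    then show "Inf i \<theta> \<in> \<Delta>" using RR by blast
  next
    assume D: "Inf i \<theta> \<in> \<Delta>"
    show "Inf i \<theta> \<in> \<Gamma>"
    proof (rule ccontr)
      assume "Inf i \<theta> \<notin> \<Gamma>"
      then have "Inf i (Neg (Inf i \<theta>)) \<in> \<Gamma>" using I_NI_iff[OF MG c2] by simp
      then have "Neg (Inf i \<theta>) \<in> \<Delta>" using RR by blast
      then show False using D MD derives_mem mcs_cons by blast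
    qed
  qed
qed

lemma R_iff:
  assumes R: "(\<Gamma>, \<Delta>) \<in> canon_R (cl \<phi>) i"
  shows "Inf i \<theta> \<in> cl \<phi> \<Longrightarrow> (Inf i \<theta> \<in> \<Gamma> \<longleftrightarrow> Inf i \<theta> \<in> \<Delta>)"
proof (induction "size \<theta>" arbitrary: \<theta> rule: less_induct)
  case less
  have MG: "mcs_in (cl \<phi>) \<Gamma>" and MD: "mcs_in (cl \<phi>) \<Delta>" using R_D[OF R] by auto
  show ?case
  proof (cases "\<exists>\<chi>. \<theta> = Inf i \<chi> \<or> \<theta> = Neg (Inf i \<chi>)")
    case False
    show ?thesis by (rule generic_iff[OF R less.prems False])
  next
    case True
    then obtain \<chi> where "\<theta> = Inf i \<chi> \<or> \<theta> = Neg (Inf i \<chi>)" by blast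
    then show ?thesis
    proof
      assume t: "\<theta> = Inf i \<chi>"
      have c1: "Inf i (Inf i \<chi>) \<in> cl \<phi>" using less.prems t by simp
      have c2: "Inf i \<chi> \<in> cl \<phi>" by (rule cl_Inf_sub[OF c1])
      have sz: "size \<chi> < size \<theta>" using t by simp
      have ih: "Inf i \<chi> \<in> \<Gamma> \<longleftrightarrow> Inf i \<chi> \<in> \<Delta>" by (rule less.hyps[OF sz c2])
      have e1: "Inf i (Inf i \<chi>) \<in> \<Gamma> \<longleftrightarrow> Inf i \<chi> \<in> \<Gamma>" by (rule I_I_iff[OF MG c1])
      have e2: "Inf i (Inf i \<chi>) \<in> \<Delta> \<longleftrightarrow> Inf i \<chi> \<in> \<Delta>" by (rule I_I_iff[OF MD c1])
      show ?thesis unfolding t using ih e1 e2 by blast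
    next
      assume t: "\<theta> = Neg (Inf i \<chi>)"
      have c1: "Inf i (Neg (Inf i \<chi>)) \<in> cl \<phi>" using less.prems t by simp
      have c2: "Inf i \<chi> \<in> cl \<phi>"
        by (rule cl.sub[OF c1]) (auto simp: self_subfms)
      have sz: "size \<chi> < size \<theta>" using t by simp
      have ih: "Inf i \<chi> \<in> \<Gamma> \<longleftrightarrow> Inf i \<chi> \<in> \<Delta>" by (rule less.hyps[OF sz c2])
      have e1: "Inf i (Neg (Inf i \<chi>)) \<in> \<Gamma> \<longleftrightarrow> Inf i \<chi> \<notin> \<Gamma>" by (rule I_NI_iff[OF MG c1])
      have e2: "Inf i (Neg (Inf i \<chi>)) \<in> \<Delta> \<longleftrightarrow> Inf i \<chi> \<notin> \<Delta>" by (rule I_NI_iff[OF MD c1])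
      show ?thesis unfolding t using ih e1 e2 by blast
    qed
  qed
qed

lemma consistent_empty: "consistent {}"
proof -
  have "\<not> AIL (Imp (Conjs []) Bot)"
  proof
    assume h: "AIL (Imp (Conjs []) Bot)"
    show False using AIL_sound[OF h] by (simp add: Imp_def Conjs_def Top_def Bot_def)
  qed
  then show ?thesis unfolding consistent_def derives_def by auto
qed

lemma mcs_exists: "\<exists>\<Gamma>. mcs_in \<Phi> \<Gamma>"
proof -
  let ?A = "{\<Gamma>. \<Gamma> \<subseteq> \<Phi> \<and> consistent \<Gamma>}"
  have "\<exists>M\<in>?A. \<forall>X\<in>?A. M \<subseteq> X \<longrightarrow> X = M"
  proof (rule subset_Zorn_nonempty)
    show "?A \<noteq> {}" using consistent_empty by blast
  next
    fix C assume ne: "C \<noteq> {}" and ch: "subset.chain ?A C"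
    have CA: "C \<subseteq> ?A" using ch by (simp add: subset.chain_def)
    have "consistent (\<Union>C)"
    proof (rule ccontr)
      assume "\<not> consistent (\<Union>C)"
      then obtain xs where xs: "set xs \<subseteq> \<Union>C" "AIL (Imp (Conjs xs) Bot)"
        unfolding consistent_def derives_def by blast
      obtain B where "B \<in> C" "set xs \<subseteq> B"
        using finite_subset_Union_chain[OF _ xs(1) ne ch] by blast
      then show False using xs CA unfolding consistent_def derives_def by blast
    qed
    then show "\<Union>C \<in> ?A" using CA by blast
  qed
  then obtain M where M: "M \<in> ?A" "\<forall>X\<in>?A. M \<subseteq> X \<longrightarrow> X = M" by blast
  have "mcs_in \<Phi> M" unfolding mcs_in_def using M by blast
  then show ?thesis by blast
qed

theorem lemma7:
  fixes \<phi> :: "('a::countable, 'g::finite) fm"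
  shows "epistemic_model (canon_W (cl \<phi>)) (canon_R (cl \<phi>)) (canon_A (cl \<phi>)) (canon_V (cl \<phi>))"
proof -
  let ?W = "canon_W (cl \<phi>)" and ?R = "canon_R (cl \<phi>)"
  have W: "?W \<noteq> {}" using mcs_exists[of "cl \<phi>"] by (auto simp: canon_W_def)
  have refl: "(\<Gamma>, \<Gamma>) \<in> ?R i" if "\<Gamma> \<in> ?W" for \<Gamma> i
  proof -
    have M: "mcs_in (cl \<phi>) \<Gamma>" using that by (simp add: canon_W_def)
    have "\<psi> \<in> \<Gamma>" if "Inf i \<psi> \<in> \<Gamma>" for \<psi>
    proof -
      have "Inf i \<psi> \<in> cl \<phi>" using that M by (auto simp: mcs_in_def)
      then have "\<psi> \<in> cl \<phi>" by (rule cl_Inf_sub)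
      then show ?thesis
        by (meson AIL.I_T M derives_ax derives_mem derives_mp mcs_in' that)
    qed
    then show ?thesis using that by (auto simp: canon_R_def)
  qed
  have sym: "(\<Delta>, \<Gamma>) \<in> ?R i" if R: "(\<Gamma>, \<Delta>) \<in> ?R i" for \<Gamma> \<Delta> i
  proof -
    have MD: "mcs_in (cl \<phi>) \<Delta>" using R_D[OF R] by auto
    have "\<psi> \<in> \<Gamma>" if "Inf i \<psi> \<in> \<Delta>" for \<psi>
    proof -
      have "Inf i \<psi> \<in> cl \<phi>" using that MD by (auto simp: mcs_in_def)
      then have "Inf i \<psi> \<in> \<Gamma>" using R_iff[OF R] that by blast
      then show ?thesis using refl[of \<Gamma> i] R_D[OF R] by (auto simp: canon_R_def canon_W_def)
    qed
    then show ?thesis using R by (auto simp: canon_R_def)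
  qed
  have trans: "(\<Gamma>, \<Sigma>) \<in> ?R i" if R1: "(\<Gamma>, \<Delta>) \<in> ?R i" and R2: "(\<Delta>, \<Sigma>) \<in> ?R i" for \<Gamma> \<Delta> \<Sigma> i
  proof -
    have MG: "mcs_in (cl \<phi>) \<Gamma>" using R_D[OF R1] by auto
    have "\<psi> \<in> \<Sigma>" if "Inf i \<psi> \<in> \<Gamma>" for \<psi>
    proof -
      have "Inf i \<psi> \<in> cl \<phi>" using that MG by (auto simp: mcs_in_def)
      then have "Inf i \<psi> \<in> \<Delta>" using R_iff[OF R1] that by blast
      then show ?thesis using R_D[OF R2] by blast
    qed
    then show ?thesis using R1 R2 by (auto simp: canon_R_def)
  qed
  have eq: "equiv ?W (?R i)" for i
  proof (rule equivI)
    show "?R i \<subseteq> ?W \<times> ?W" by (auto simp: canon_R_def)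
    show "refl_on ?W (?R i)" by (rule refl_onI) (rule refl)
    show "sym (?R i)" unfolding sym_def using sym by blast
    show "Relation.trans (?R i)" unfolding trans_def using trans by blast
  qed
  have aw1: "p \<in> canon_A (cl \<phi>) i \<Delta>" if R: "(\<Gamma>, \<Delta>) \<in> ?R i" and p: "p \<in> canon_A (cl \<phi>) i \<Gamma>" for \<Gamma> \<Delta> i p
  proof -
    have MG: "mcs_in (cl \<phi>) \<Gamma>" using R_D[OF R] by auto
    have a: "Aw i (Atom p) \<in> \<Gamma>" using p by (simp add: canon_A_def)
    have c: "Aw i (Atom p) \<in> cl \<phi>" using a MG by (auto simp: mcs_in_def)
    have c2: "Inf i (Aw i (Atom p)) \<in> cl \<phi>" by (rule cl.A_IA[OF c])
    have "Inf i (Aw i (Atom p)) \<in> \<Gamma>"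
      by (meson AIL.A_intro MG a c2 derives_ax derives_mem derives_mp mcs_in')
    then show ?thesis using R_D[OF R] by (simp add: canon_A_def)
  qed
  have aw: "canon_A (cl \<phi>) i w = canon_A (cl \<phi>) i v" if "(w, v) \<in> ?R i" for i w v
    using aw1[OF that] aw1[OF sym[OF that]] by blast
  have V: "canon_V (cl \<phi>) p \<subseteq> ?W" for p by (auto simp: canon_V_def)
  show ?thesis unfolding epistemic_model_def using W eq aw V by blast
qed

end
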